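(* Let $a>0$, $R>0$. Let $(\mathbf{x}^\circ,\mathbf{y}_1^\circ,\mathbf{y}_2^\circ)\in\mathcal{S}_R^3$ satisfy $\mathbf{y}_1^\circ-\mathbf{x}^\circ=-(\mathbf{y}_2^\circ-\mathbf{x}^\circ)$. Let $\ell>0$, let $\mathbf{e}_\perp$ be a unit vector orthogonal to $\mathbf{y}_1^\circ-\mathbf{x}^\circ$, and set $\boldsymbol{\Delta}=\ell\mathbf{e}_\perp$. Then there exist $T>0$ and a control $\mathbf{u}\in L^\infty([0,T];\mathbb{R}^3)$ such that the solution of $$\dot{\mathbf{x}}=\mathbf{u},\qquad \dot{\mathbf{y}}_j=\frac{3a}{4}\left(\frac{I}{\|\mathbf{d}_j\|}+\frac{\mathbf{d}_j\otimes\mathbf{d}_j}{\|\mathbf{d}_j\|^3}\right)\mathbf{u},\quad \mathbf{d}_j=\mathbf{y}_j-\mathbf{x},\ j=1,2,$$ starting at $(\mathbf{x}^\circ,\mathbf{y}_1^\circ,\mathbf{y}_2^\circ)$ remains in $\mathcal{S}_R^3$ on $[0,T]$ and reaches $(\mathbf{x}^\circ+\boldsymbol{\Delta},\mathbf{y}_1^\circ+\boldsymbol{\Delta},\mathbf{y}_2^\circ+\boldsymbol{\Delta})$ at time $T$.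
   Context: The model describes one active sphere of radius $a$ at $\mathbf{x}(t)\in\mathbb{R}^3$ with velocity the control $\mathbf{u}$, and two passive point particles at $\mathbf{y}_1,\mathbf{y}_2$ advected by its far-field Stokeslet flow; $I$ is the $3\times 3$ identity. For $R>0$, $\mathcal{S}_R^3$ is the set of triples of points of $\mathbb{R}^3$ whose pairwise distances all exceed $R$ (well-separated configurations). *)

theory Defs
  imports "HOL-Analysis.Analysis"
begin

type_synonym vec3 = "real ^ 3"

definition sepR :: "real \<Rightarrow> vec3 \<Rightarrow> vec3 \<Rightarrow> vec3 \<Rightarrow> bool" where
  "sepR R x y1 y2 \<longleftrightarrow> dist x y1 > R \<and> dist x y2 > R \<and> dist y1 y2 > R"

definition stokeslet :: "real \<Rightarrow> vec3 \<Rightarrow> vec3 \<Rightarrow> vec3" where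
  "stokeslet a d u = (3 * a / 4) *\<^sub>R ((1 / norm d) *\<^sub>R u + ((d \<bullet> u) / norm d ^ 3) *\<^sub>R d)"

end

theory Submission
  imports Defs "HOL-Analysis.Cross3"
begin

definition sol :: "real \<Rightarrow> real \<Rightarrow> real \<Rightarrow> (real \<Rightarrow> vec3) \<Rightarrow> (real \<Rightarrow> vec3) \<Rightarrow> (real \<Rightarrow> vec3) \<Rightarrow> (real \<Rightarrow> vec3) \<Rightarrow> bool" where
  "sol a R T u x y1 y2 \<longleftrightarrow> T \<ge> 0 \<and> (\<exists>B. \<forall>t\<in>{0..T}. norm (u t) \<le> B) \<and>
     (\<forall>t\<in>{0..T}.
        (u has_integral (x t - x 0)) {0..t} \<and>
        ((\<lambda>s. stokeslet a (y1 s - x s) (u s)) has_integral (y1 t - y1 0)) {0..t} \<and>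
        ((\<lambda>s. stokeslet a (y2 s - x s) (u s)) has_integral (y2 t - y2 0)) {0..t} \<and>
        sepR R (x t) (y1 t) (y2 t))"

lemma sol_translate:
  assumes "sol a R T u x y1 y2"
  shows "sol a R T u (\<lambda>t. x t + v) (\<lambda>t. y1 t + v) (\<lambda>t. y2 t + v)"
  using assms unfolding sol_def sepR_def by (simp add: dist_add_cancel2)

definition glue :: "real \<Rightarrow> (real \<Rightarrow> 'a) \<Rightarrow> (real \<Rightarrow> 'a) \<Rightarrow> real \<Rightarrow> 'a" where
  "glue T1 f g = (\<lambda>t. if t \<le> T1 then f t else g (t - T1))"

lemma glue_int:
  fixes f g :: "real \<Rightarrow> vec3"
  assumes T1: "T1 \<ge> 0" and T2: "T2 \<ge> 0"
    and f: "\<forall>t\<in>{0..T1}. (f has_integral (F t - F 0)) {0..t}"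
    and g: "\<forall>t\<in>{0..T2}. (g has_integral (G t - G 0)) {0..t}"
    and FG: "G 0 = F T1"
    and t: "t \<in> {0..T1+T2}"
  shows "(glue T1 f g has_integral (glue T1 F G t - glue T1 F G 0)) {0..t}"
proof (cases "t \<le> T1")
  case True
  have "(f has_integral (F t - F 0)) {0..t}" using f t True by auto
  moreover have "glue T1 F G t - glue T1 F G 0 = F t - F 0" using True T1 by (simp add: glue_def)
  ultimately show ?thesis
    by (metis (no_types, lifting) has_integral_eq True atLeastAtMost_iff glue_def order.trans)
next
  case False
  have i1: "(glue T1 f g has_integral (F T1 - F 0)) {0..T1}"
    by (rule has_integral_eq[rotated, OF f[rule_format, of T1]]) (use T1 in \<open>auto simp: glue_def\<close>)
  have "(g has_integral (G (t - T1) - G 0)) {0..t - T1}" using g t False by auto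
  then have "((\<lambda>s. g (s + (- T1))) has_integral (G (t - T1) - G 0)) {0 - (-T1)..t - T1 - (-T1)}"
    by (rule has_integral_shift_real_ivl)
  then have "((\<lambda>s. g (s - T1)) has_integral (G (t - T1) - G 0)) {T1..t}" by simp
  then have i2: "(glue T1 f g has_integral (G (t - T1) - G 0)) {T1..t}"
    by (rule has_integral_spike_finite[of "{T1}", rotated 2]) (auto simp: glue_def)
  have "(glue T1 f g has_integral ((F T1 - F 0) + (G (t - T1) - G 0))) {0..t}"
    by (rule has_integral_combine[OF T1 _ i1 i2]) (use False in auto)
  then show ?thesis using False T1 FG by (simp add: glue_def)
qed

lemma sol_concat:
  assumes s1: "sol a R T1 u x y1 y2" and s2: "sol a R T2 u' x' y1' y2'"
    and j: "x' 0 = x T1" "y1' 0 = y1 T1" "y2' 0 = y2 T1"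
  shows "sol a R (T1 + T2) (glue T1 u u') (glue T1 x x') (glue T1 y1 y1') (glue T1 y2 y2')"
proof -
  have T1: "T1 \<ge> 0" and T2: "T2 \<ge> 0" using s1 s2 by (auto simp: sol_def)
  obtain B1 where B1: "\<forall>t\<in>{0..T1}. norm (u t) \<le> B1" using s1 by (auto simp: sol_def)
  obtain B2 where B2: "\<forall>t\<in>{0..T2}. norm (u' t) \<le> B2" using s2 by (auto simp: sol_def)
  have bnd: "\<forall>t\<in>{0..T1+T2}. norm (glue T1 u u' t) \<le> max B1 B2"
    using B1 B2 T1 by (auto simp: glue_def) (smt (verit) atLeastAtMost_iff)+
  have e1: "(\<lambda>s. stokeslet a (glue T1 y1 y1' s - glue T1 x x' s) (glue T1 u u' s))
      = glue T1 (\<lambda>s. stokeslet a (y1 s - x s) (u s)) (\<lambda>s. stokeslet a (y1' s - x' s) (u' s))"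
    by (auto simp: glue_def)
  have e2: "(\<lambda>s. stokeslet a (glue T1 y2 y2' s - glue T1 x x' s) (glue T1 u u' s))
      = glue T1 (\<lambda>s. stokeslet a (y2 s - x s) (u s)) (\<lambda>s. stokeslet a (y2' s - x' s) (u' s))"
    by (auto simp: glue_def)
  show ?thesis
    unfolding sol_def e1 e2
  proof (intro conjI ballI)
    show "0 \<le> T1 + T2" using T1 T2 by simp
    show "\<exists>B. \<forall>t\<in>{0..T1 + T2}. norm (glue T1 u u' t) \<le> B" using bnd by blast
    fix t assume t: "t \<in> {0..T1+T2}"
    show "(glue T1 u u' has_integral (glue T1 x x' t - glue T1 x x' 0)) {0..t}"
      by (rule glue_int[OF T1 T2 _ _ _ t]) (use s1 s2 j in \<open>auto simp: sol_def\<close>)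
    show "(glue T1 (\<lambda>s. stokeslet a (y1 s - x s) (u s)) (\<lambda>s. stokeslet a (y1' s - x' s) (u' s)) has_integral
        (glue T1 y1 y1' t - glue T1 y1 y1' 0)) {0..t}"
      by (rule glue_int[OF T1 T2 _ _ _ t]) (use s1 s2 j in \<open>auto simp: sol_def\<close>)
    show "(glue T1 (\<lambda>s. stokeslet a (y2 s - x s) (u s)) (\<lambda>s. stokeslet a (y2' s - x' s) (u' s)) has_integral
        (glue T1 y2 y2' t - glue T1 y2 y2' 0)) {0..t}"
      by (rule glue_int[OF T1 T2 _ _ _ t]) (use s1 s2 j in \<open>auto simp: sol_def\<close>)
    show "sepR R (glue T1 x x' t) (glue T1 y1 y1' t) (glue T1 y2 y2' t)"
      using s1 s2 t T1 unfolding sol_def glue_def by auto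
  qed
qed

lemma sol_repeat:
  assumes s: "sol a R T u x y1 y2"
    and T0: "T > 0" and e: "x T = x 0 + v" "y1 T = y1 0 + v" "y2 T = y2 0 + v"
  shows "\<exists>U X Y1 Y2. sol a R (real (Suc N) * T) U X Y1 Y2 \<and> X 0 = x 0 \<and> Y1 0 = y1 0 \<and> Y2 0 = y2 0 \<and>
     X (real (Suc N) * T) = x 0 + real (Suc N) *\<^sub>R v \<and> Y1 (real (Suc N) * T) = y1 0 + real (Suc N) *\<^sub>R v \<and>
     Y2 (real (Suc N) * T) = y2 0 + real (Suc N) *\<^sub>R v"
proof (induction N)
  case 0
  then show ?case using s e by (rule_tac x=u in exI, rule_tac x=x in exI, rule_tac x=y1 in exI, rule_tac x=y2 in exI) simp
next
  case (Suc N)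
  then obtain U X Y1 Y2 where IH: "sol a R (real (Suc N) * T) U X Y1 Y2" "X 0 = x 0" "Y1 0 = y1 0" "Y2 0 = y2 0"
     "X (real (Suc N) * T) = x 0 + real (Suc N) *\<^sub>R v" "Y1 (real (Suc N) * T) = y1 0 + real (Suc N) *\<^sub>R v"
     "Y2 (real (Suc N) * T) = y2 0 + real (Suc N) *\<^sub>R v" by blast
  let ?w = "real (Suc N) *\<^sub>R v"
  have st: "sol a R T u (\<lambda>t. x t + ?w) (\<lambda>t. y1 t + ?w) (\<lambda>t. y2 t + ?w)" by (rule sol_translate[OF s])
  have c: "sol a R (real (Suc N) * T + T) (glue (real (Suc N) * T) U (u)) (glue (real (Suc N) * T) X (\<lambda>t. x t + ?w))
     (glue (real (Suc N) * T) Y1 (\<lambda>t. y1 t + ?w)) (glue (real (Suc N) * T) Y2 (\<lambda>t. y2 t + ?w))"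
    by (rule sol_concat[OF IH(1) st]) (use IH in \<open>auto simp: add.commute\<close>)
  have eq: "real (Suc N) * T + T = real (Suc (Suc N)) * T" by (simp add: algebra_simps)
  have ev: "real (Suc (Suc N)) *\<^sub>R v = real (Suc N) *\<^sub>R v + v"
    by (simp only: of_nat_Suc[of "Suc N"] scaleR_left_distrib scaleR_one add.commute)
  show ?case
    apply (rule exI[of _ "glue (real (Suc N) * T) U (u)"])
    apply (rule exI[of _ "glue (real (Suc N) * T) X (\<lambda>t. x t + ?w)"])
    apply (rule exI[of _ "glue (real (Suc N) * T) Y1 (\<lambda>t. y1 t + ?w)"])
    apply (rule exI[of _ "glue (real (Suc N) * T) Y2 (\<lambda>t. y2 t + ?w)"])
    using c IH e T0 unfolding eq[symmetric] ev
    apply (simp add: glue_def)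
    done
qed

lemma stokes_id:
  fixes lam G rho L c a sg :: real and n p p' :: vec3
  assumes c: "c = 3 * a / 4" and n: "norm n = 1" and np: "n \<bullet> p = 0" and np': "n \<bullet> p' = 0"
    and sg: "sg = 1 \<or> sg = -1"
    and lam: "lam > 0" and rho: "rho > 0" and lr: "lam * sqrt (1 + p \<bullet> p) = rho"
    and cr: "c \<noteq> rho" and G: "G = lam * rho / (c - rho)"
    and L: "2 * L = c * lam^2 * G / rho^3"
  shows "G *\<^sub>R p' + (L * (2 * (p \<bullet> p'))) *\<^sub>R (p + sg *\<^sub>R n) + lam *\<^sub>R p'
        = stokeslet a (lam *\<^sub>R (p + sg *\<^sub>R n)) (G *\<^sub>R p')"
proof -
  have nn: "n \<bullet> n = 1" using n by (simp add: norm_eq_1)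
  have sg2: "sg * sg = 1" using sg by auto
  have "(p + sg *\<^sub>R n) \<bullet> (p + sg *\<^sub>R n) = 1 + p \<bullet> p"
    using np nn sg2 by (simp add: inner_add_left inner_add_right inner_commute algebra_simps)
  then have "norm (p + sg *\<^sub>R n) = sqrt (1 + p \<bullet> p)" by (simp add: norm_eq_sqrt_inner)
  then have nd: "norm (lam *\<^sub>R (p + sg *\<^sub>R n)) = rho" using lam lr by simp
  have dot: "(lam *\<^sub>R (p + sg *\<^sub>R n)) \<bullet> (G *\<^sub>R p') = lam * G * (p \<bullet> p')"
  proof -
    have "p' \<bullet> n = 0" using np' by (simp add: inner_commute)
    then show ?thesis by (simp add: inner_add_right inner_commute)
  qed
  have c1: "G + lam = (3 * a / 4) * (1 / rho) * G"
    using cr rho unfolding G c[symmetric] by (simp add: field_simps)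
  have c2: "L * (2 * (p \<bullet> p')) = (3 * a / 4) * (lam * G * (p \<bullet> p') / rho ^ 3) * lam"
  proof -
    have "L * (2 * (p \<bullet> p')) = (2 * L) * (p \<bullet> p')" by simp
    also have "\<dots> = c * lam^2 * G / rho^3 * (p \<bullet> p')" using L by simp
    also have "\<dots> = c * (lam * G * (p \<bullet> p') / rho ^ 3) * lam" by (simp add: power2_eq_square)
    finally show ?thesis using c by simp
  qed
  have "stokeslet a (lam *\<^sub>R (p + sg *\<^sub>R n)) (G *\<^sub>R p')
      = ((3 * a / 4) * (1 / rho) * G) *\<^sub>R p' + ((3 * a / 4) * (lam * G * (p \<bullet> p') / rho ^ 3) * lam) *\<^sub>R (p + sg *\<^sub>R n)"
    unfolding stokeslet_def nd dot by (simp add: scaleR_add_right mult_ac)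
  also have "\<dots> = (G + lam) *\<^sub>R p' + (L * (2 * (p \<bullet> p'))) *\<^sub>R (p + sg *\<^sub>R n)" using c1 c2 by simp
  finally show ?thesis by (simp add: scaleR_add_left)
qed


definition rhof :: "real \<Rightarrow> real \<Rightarrow> real \<Rightarrow> real \<Rightarrow> real \<Rightarrow> real" where
  "rhof c s A Q z = c + s * sqrt (A - Q * z)"
definition lamf :: "real \<Rightarrow> real \<Rightarrow> real \<Rightarrow> real \<Rightarrow> real \<Rightarrow> real" where
  "lamf c s A Q z = rhof c s A Q z / sqrt (1 + z)"
definition Gf :: "real \<Rightarrow> real \<Rightarrow> real \<Rightarrow> real \<Rightarrow> real \<Rightarrow> real" where
  "Gf c s A Q z = lamf c s A Q z * rhof c s A Q z / (c - rhof c s A Q z)"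
definition Lf :: "real \<Rightarrow> real \<Rightarrow> real \<Rightarrow> real \<Rightarrow> real \<Rightarrow> real" where
  "Lf c s A Q z = c * rhof c s A Q z / (2 * (1 + z) * sqrt (1 + z) * (c - rhof c s A Q z))"

lemma rho_deriv:
  assumes pos: "A - Q * z > 0"
  shows "(rhof c s A Q has_real_derivative (s * (inverse (sqrt (A - Q * z)) / 2 * - Q))) (at z)"
proof -
  have "((\<lambda>z. A - Q * z) has_real_derivative (- Q)) (at z)"
    by (auto intro!: derivative_eq_intros)
  from DERIV_chain2[OF DERIV_real_sqrt[OF pos] this]
  have sq: "((\<lambda>z. sqrt (A - Q * z)) has_real_derivative (inverse (sqrt (A - Q * z)) / 2 * - Q)) (at z)" .
  have "((\<lambda>z. c + s * sqrt (A - Q * z)) has_real_derivative (0 + s * (inverse (sqrt (A - Q * z)) / 2 * - Q))) (at z)"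
    by (rule DERIV_add[OF DERIV_const DERIV_cmult[OF sq]])
  then show ?thesis unfolding rhof_def by simp
qed

lemma lam_deriv0:
  assumes pos: "A - Q * z > 0" and z: "z \<ge> 0"
  shows "(lamf c s A Q has_real_derivative
      ((s * (inverse (sqrt (A - Q * z)) / 2 * - Q)) * sqrt (1 + z) - rhof c s A Q z * (inverse (sqrt (1 + z)) / 2 * 1)) / (sqrt (1 + z) * sqrt (1 + z))) (at z)"
proof -
  have p1: "1 + z > 0" using z by simp
  have "((\<lambda>z. 1 + z) has_real_derivative 1) (at z)"
    by (auto intro!: derivative_eq_intros)
  from DERIV_chain2[OF DERIV_real_sqrt[OF p1] this]
  have w: "((\<lambda>z. sqrt (1 + z)) has_real_derivative (inverse (sqrt (1 + z)) / 2 * 1)) (at z)" .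
  have "sqrt (1 + z) \<noteq> 0" using p1 by simp
  from DERIV_divide[OF rho_deriv[OF pos] w this]
  show ?thesis unfolding lamf_def .
qed
lemma alg1:
  fixes r w z A Q c :: real
  assumes r: "r \<noteq> 0" and w: "w > 0" and ww: "w * w = 1 + z" and rr: "r * r = A - Q * z" and AQ: "c * c - A = Q"
  shows "((inverse r / 2 * - Q) * w - (c + r) * (inverse w / 2 * 1)) / (w * w)
       = c * (c + r) / (2 * (1 + z) * w * (c - (c + r)))"
proof -
  have Q: "Q * (w * w) = (c + r) * (c - r)"
    using ww rr AQ by (simp add: algebra_simps) 
  have l: "((inverse r / 2 * - Q) * w - (c + r) * (inverse w / 2 * 1)) / (w * w)
        = (- Q * (w * w) - (c + r) * r) / (2 * r * w * (w * w))"
    using r w by (simp add: field_simps)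
  have rhs: "c * (c + r) / (2 * (1 + z) * w * (c - (c + r))) = c * (c + r) / (2 * (w * w) * w * (- r))"
    using ww by simp
  have num: "- Q * (w * w) - (c + r) * r = - (c * (c + r))"
    using Q by (simp add: algebra_simps)
  show ?thesis unfolding l rhs num using r w by (simp add: field_simps)
qed

lemma lam_deriv:
  assumes s: "s = 1 \<or> s = -1" and AQ: "c * c - A = Q" and z: "z \<ge> 0" and pos: "A - Q * z > 0"
  shows "(lamf c s A Q has_real_derivative Lf c s A Q z) (at z)"
proof -
  define r where "r = s * sqrt (A - Q * z)"
  define w where "w = sqrt (1 + z)"
  have r0: "r \<noteq> 0" using s pos by (auto simp: r_def)
  have w0: "w > 0" using z by (simp add: w_def)
  have ww: "w * w = 1 + z" using z by (simp add: w_def)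
  have rr: "r * r = A - Q * z" using s pos by (auto simp: r_def)
  have inv: "s * (inverse (sqrt (A - Q * z)) / 2 * - Q) = inverse r / 2 * - Q"
    using s by (auto simp: r_def)
  have rho: "rhof c s A Q z = c + r" by (simp add: rhof_def r_def)
  have "Lf c s A Q z = c * (c + r) / (2 * (1 + z) * w * (c - (c + r)))"
    by (simp add: Lf_def rho w_def)
  also have "\<dots> = ((inverse r / 2 * - Q) * w - (c + r) * (inverse w / 2 * 1)) / (w * w)"
    by (rule alg1[OF r0 w0 ww rr AQ, symmetric])
  finally have e: "Lf c s A Q z = ((s * (inverse (sqrt (A - Q * z)) / 2 * - Q)) * sqrt (1 + z) - rhof c s A Q z * (inverse (sqrt (1 + z)) / 2 * 1)) / (sqrt (1 + z) * sqrt (1 + z))"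
    unfolding inv rho w_def .
  show ?thesis unfolding e by (rule lam_deriv0[OF pos z])
qed

locale cfg =
  fixes a R rho0 sd :: real and n :: vec3
  assumes a: "a > 0" and R: "R > 0" and n: "norm n = 1" and sd: "sd = 1 \<or> sd = -1"
begin

definition "c = 3 * a / 4"
definition "A = (rho0 - c)^2"
definition "Q = rho0 * (2 * c - rho0)"
abbreviation "rz \<equiv> rhof c sd A Q"
abbreviation "lz \<equiv> lamf c sd A Q"
abbreviation "Gz \<equiv> Gf c sd A Q"
definition "good z \<longleftrightarrow> z \<ge> 0 \<and> A - Q * z > 0 \<and> rz z > R \<and> 2 * lz z > R"

lemma AQ: "c * c - A = Q" unfolding A_def Q_def by (simp add: algebra_simps power2_eq_square)

lemma good_facts:
  assumes "good z"
  shows "rz z > 0" "lz z > 0" "lz z * sqrt (1 + z) = rz z" "c \<noteq> rz z"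
    "2 * Lf c sd A Q z = c * (lz z)^2 * Gz z / (rz z)^3"
proof -
  have z: "z \<ge> 0" and p: "A - Q * z > 0" and r: "rz z > R" using assms by (auto simp: good_def)
  show r0: "rz z > 0" using r R by simp
  have w: "sqrt (1 + z) > 0" using z by simp
  show "lz z > 0" using r0 w by (simp add: lamf_def)
  show "lz z * sqrt (1 + z) = rz z" using w by (simp add: lamf_def)
  show cr: "c \<noteq> rz z" using sd p by (auto simp: rhof_def)
  show "2 * Lf c sd A Q z = c * (lz z)^2 * Gz z / (rz z)^3"
  proof -
    define W where "W = sqrt (1 + z)"
    define P where "P = rz z"
    have W: "W > 0" "W * W = 1 + z" using z by (auto simp: W_def)
    have P: "P > 0" "c - P \<noteq> 0" using r0 cr by (auto simp: P_def)
    have "2 * Lf c sd A Q z = c * P / ((W * W) * W * (c - P))"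
    proof -
      have "Lf c sd A Q z = c * P / (2 * ((W * W) * W * (c - P)))"
        unfolding Lf_def P_def[symmetric] W_def[symmetric] W(2) by (simp add: mult.assoc)
      then show ?thesis by simp
    qed
    also have "\<dots> = c * (P / W)^2 * ((P / W) * P / (c - P)) / P^3"
      using W(1) P by (simp add: field_simps power2_eq_square power3_eq_cube)
    finally show ?thesis unfolding Gf_def lamf_def P_def W_def .
  qed
qed

lemma ymotion:
  fixes p p' F :: "real \<Rightarrow> vec3" and X :: vec3 and sg :: real
  assumes sg: "sg = 1 \<or> sg = -1"
    and dp: "\<And>t. t \<in> {0..1} \<Longrightarrow> (p has_vector_derivative p' t) (at t within {0..1})"
    and perp: "\<And>t. t \<in> {0..1} \<Longrightarrow> n \<bullet> p t = 0 \<and> n \<bullet> p' t = 0"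
    and gd: "\<And>t. t \<in> {0..1} \<Longrightarrow> good (p t \<bullet> p t)"
    and dF: "\<And>t. t \<in> {0..1} \<Longrightarrow> (F has_vector_derivative (Gz (p t \<bullet> p t) *\<^sub>R p' t)) (at t within {0..1})"
    and t: "t \<in> {0..1}"
  shows "((\<lambda>s. stokeslet a ((X + (F s - F 0) + lz (p s \<bullet> p s) *\<^sub>R (p s + sg *\<^sub>R n)) - (X + (F s - F 0))) (Gz (p s \<bullet> p s) *\<^sub>R p' s))
     has_integral ((X + (F t - F 0) + lz (p t \<bullet> p t) *\<^sub>R (p t + sg *\<^sub>R n)) - (X + (F 0 - F 0) + lz (p 0 \<bullet> p 0) *\<^sub>R (p 0 + sg *\<^sub>R n)))) {0..t}"
proof -
  have D: "((\<lambda>s. X + (F s - F 0) + lz (p s \<bullet> p s) *\<^sub>R (p s + sg *\<^sub>R n)) has_vector_derivative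
      stokeslet a ((X + (F s - F 0) + lz (p s \<bullet> p s) *\<^sub>R (p s + sg *\<^sub>R n)) - (X + (F s - F 0))) (Gz (p s \<bullet> p s) *\<^sub>R p' s))
      (at s within {0..t})" if s: "s \<in> {0..t}" for s
  proof -
    have s1: "s \<in> {0..1}" using s t by auto
    have sub: "{0..t} \<subseteq> {0..1}" using t by auto
    have g: "good (p s \<bullet> p s)" by (rule gd[OF s1])
    have z: "p s \<bullet> p s \<ge> 0" "A - Q * (p s \<bullet> p s) > 0" using g by (auto simp: good_def)
    have dz: "((\<lambda>s. p s \<bullet> p s) has_real_derivative (p s \<bullet> p' s + p' s \<bullet> p s)) (at s within {0..1})"
      unfolding has_real_derivative_iff_has_vector_derivative
      by (rule bounded_bilinear.has_vector_derivative[OF bounded_bilinear_inner dp[OF s1] dp[OF s1]])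
    have dl: "((\<lambda>s. lz (p s \<bullet> p s)) has_real_derivative Lf c sd A Q (p s \<bullet> p s) * (p s \<bullet> p' s + p' s \<bullet> p s)) (at s within {0..1})"
      by (rule DERIV_chain2[OF lam_deriv[OF sd AQ z] dz])
    have dpn: "((\<lambda>s. p s + sg *\<^sub>R n) has_vector_derivative p' s + 0) (at s within {0..1})"
      by (rule has_vector_derivative_add[OF dp[OF s1] has_vector_derivative_const])
    have dy: "((\<lambda>s. lz (p s \<bullet> p s) *\<^sub>R (p s + sg *\<^sub>R n)) has_vector_derivative
       (lz (p s \<bullet> p s) *\<^sub>R (p' s + 0) + (Lf c sd A Q (p s \<bullet> p s) * (p s \<bullet> p' s + p' s \<bullet> p s)) *\<^sub>R (p s + sg *\<^sub>R n))) (at s within {0..1})"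
      by (rule has_vector_derivative_scaleR[OF dl dpn])
    have dx: "((\<lambda>s. X + (F s - F 0)) has_vector_derivative 0 + (Gz (p s \<bullet> p s) *\<^sub>R p' s - 0)) (at s within {0..1})"
      by (rule has_vector_derivative_add[OF has_vector_derivative_const has_vector_derivative_diff[OF dF[OF s1] has_vector_derivative_const]])
    have dall: "((\<lambda>s. X + (F s - F 0) + lz (p s \<bullet> p s) *\<^sub>R (p s + sg *\<^sub>R n)) has_vector_derivative
       (0 + (Gz (p s \<bullet> p s) *\<^sub>R p' s - 0)) + (lz (p s \<bullet> p s) *\<^sub>R (p' s + 0) + (Lf c sd A Q (p s \<bullet> p s) * (p s \<bullet> p' s + p' s \<bullet> p s)) *\<^sub>R (p s + sg *\<^sub>R n))) (at s within {0..1})"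
      by (rule has_vector_derivative_add[OF dx dy])
    have eq: "(0 + (Gz (p s \<bullet> p s) *\<^sub>R p' s - 0)) + (lz (p s \<bullet> p s) *\<^sub>R (p' s + 0) + (Lf c sd A Q (p s \<bullet> p s) * (p s \<bullet> p' s + p' s \<bullet> p s)) *\<^sub>R (p s + sg *\<^sub>R n))
       = stokeslet a ((X + (F s - F 0) + lz (p s \<bullet> p s) *\<^sub>R (p s + sg *\<^sub>R n)) - (X + (F s - F 0))) (Gz (p s \<bullet> p s) *\<^sub>R p' s)"
    proof -
      have "p' s \<bullet> p s = p s \<bullet> p' s" by (simp add: inner_commute)
      then have e1: "(p s \<bullet> p' s + p' s \<bullet> p s) = 2 * (p s \<bullet> p' s)" by simp
      have "Gz (p s \<bullet> p s) *\<^sub>R p' s + (Lf c sd A Q (p s \<bullet> p s) * (2 * (p s \<bullet> p' s))) *\<^sub>R (p s + sg *\<^sub>R n) + lz (p s \<bullet> p s) *\<^sub>R p' s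
          = stokeslet a (lz (p s \<bullet> p s) *\<^sub>R (p s + sg *\<^sub>R n)) (Gz (p s \<bullet> p s) *\<^sub>R p' s)"
        using good_facts[OF g] perp[OF s1] n sg
        by (intro stokes_id[where c=c and rho="rz (p s \<bullet> p s)"]) (auto simp: c_def Gf_def)
      then show ?thesis unfolding e1 by (simp add: algebra_simps)
    qed
    show ?thesis using has_vector_derivative_within_subset[OF dall sub] unfolding eq .
  qed
  have "t \<ge> 0" using t by simp
  from fundamental_theorem_of_calculus[OF this D]
  show ?thesis by simp
qed

end

lemma d12_gen: fixes p n :: "'a::real_vector"
  shows "x *\<^sub>R (p + 1 *\<^sub>R n) - x *\<^sub>R (p + (-1) *\<^sub>R n) = (2 * x) *\<^sub>R n"
proof -
  have "x *\<^sub>R (p + 1 *\<^sub>R n) - x *\<^sub>R (p + (-1) *\<^sub>R n) = x *\<^sub>R n + x *\<^sub>R n"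
    by (simp add: scaleR_add_right scaleR_diff_right)
  also have "\<dots> = (2 * x) *\<^sub>R n" by (simp add: scaleR_left_distrib[symmetric])
  finally show ?thesis .
qed

context cfg begin

lemma norm_d:
  assumes g: "good (p \<bullet> p)" and np: "n \<bullet> p = 0" and sg: "sg = 1 \<or> sg = -1"
  shows "norm (lz (p \<bullet> p) *\<^sub>R (p + sg *\<^sub>R n)) = rz (p \<bullet> p)"
proof -
  have nn: "n \<bullet> n = 1" using n by (simp add: norm_eq_1)
  have sg2: "sg * sg = 1" using sg by auto
  have "(p + sg *\<^sub>R n) \<bullet> (p + sg *\<^sub>R n) = 1 + p \<bullet> p"
    using np nn sg2 by (simp add: inner_add_left inner_add_right inner_commute algebra_simps)
  then have "norm (p + sg *\<^sub>R n) = sqrt (1 + p \<bullet> p)" by (simp add: norm_eq_sqrt_inner)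
  then show ?thesis using good_facts[OF g] by simp
qed

lemma Gz_cont: "continuous_on {z. z \<ge> 0 \<and> A - Q * z > 0} Gz"
proof -
  have "continuous_on {z. z \<ge> 0 \<and> A - Q * z > 0}
     (\<lambda>z. (c + sd * sqrt (A - Q * z)) / sqrt (1 + z) * (c + sd * sqrt (A - Q * z)) / (c - (c + sd * sqrt (A - Q * z))))"
    using sd by (intro continuous_intros) auto
  then show ?thesis unfolding Gf_def lamf_def rhof_def .
qed

lemma phase:
  fixes p p' F :: "real \<Rightarrow> vec3" and X :: vec3
  assumes dp: "\<And>t. t \<in> {0..1} \<Longrightarrow> (p has_vector_derivative p' t) (at t within {0..1})"
    and cp': "continuous_on {0..1} p'"
    and perp: "\<And>t. t \<in> {0..1} \<Longrightarrow> n \<bullet> p t = 0 \<and> n \<bullet> p' t = 0"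
    and gd: "\<And>t. t \<in> {0..1} \<Longrightarrow> good (p t \<bullet> p t)"
    and dF: "\<And>t. t \<in> {0..1} \<Longrightarrow> (F has_vector_derivative (Gz (p t \<bullet> p t) *\<^sub>R p' t)) (at t within {0..1})"
  shows "sol a R 1 (\<lambda>t. Gz (p t \<bullet> p t) *\<^sub>R p' t) (\<lambda>t. X + (F t - F 0))
     (\<lambda>t. X + (F t - F 0) + lz (p t \<bullet> p t) *\<^sub>R (p t + 1 *\<^sub>R n))
     (\<lambda>t. X + (F t - F 0) + lz (p t \<bullet> p t) *\<^sub>R (p t + (-1) *\<^sub>R n))"
  unfolding sol_def
proof (intro conjI ballI)
  show "(0::real) \<le> 1" by simp
  have cp: "continuous_on {0..1} p"
    using dp has_vector_derivative_continuous continuous_on_eq_continuous_within by blast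
  have cz: "continuous_on {0..1} (\<lambda>t. p t \<bullet> p t)" using cp by (intro continuous_intros)
  have cG: "continuous_on {0..1} (\<lambda>t. Gz (p t \<bullet> p t))"
  proof (rule continuous_on_compose2[OF Gz_cont cz])
    show "(\<lambda>t. p t \<bullet> p t) ` {0..1} \<subseteq> {z. z \<ge> 0 \<and> A - Q * z > 0}"
    proof
      fix y assume "y \<in> (\<lambda>t. p t \<bullet> p t) ` {0..1}"
      then obtain t where "t \<in> {0..1}" "y = p t \<bullet> p t" by blast
      then show "y \<in> {z. z \<ge> 0 \<and> A - Q * z > 0}" using gd[of t] unfolding good_def by simp
    qed
  qed
  have cu: "continuous_on {0..1} (\<lambda>t. Gz (p t \<bullet> p t) *\<^sub>R p' t)"
    using cG cp' by (intro continuous_intros)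
  have "compact ((\<lambda>t. Gz (p t \<bullet> p t) *\<^sub>R p' t) ` {0..1})"
    by (rule compact_continuous_image[OF cu compact_Icc])
  from compact_imp_bounded[OF this] obtain B where "\<forall>y \<in> (\<lambda>t. Gz (p t \<bullet> p t) *\<^sub>R p' t) ` {0..1}. norm y \<le> B"
    unfolding bounded_iff by blast
  then show "\<exists>B. \<forall>t\<in>{0..1}. norm (Gz (p t \<bullet> p t) *\<^sub>R p' t) \<le> B" by auto
  fix t :: real assume t: "t \<in> {0..1}"
  have sub: "{0..t} \<subseteq> {0..1}" using t by auto
  have "((\<lambda>t. Gz (p t \<bullet> p t) *\<^sub>R p' t) has_integral (F t - F 0)) {0..t}"
    by (rule fundamental_theorem_of_calculus) (use t in \<open>auto intro: has_vector_derivative_within_subset[OF dF sub]\<close>)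
  then show "((\<lambda>t. Gz (p t \<bullet> p t) *\<^sub>R p' t) has_integral (X + (F t - F 0) - (X + (F 0 - F 0)))) {0..t}"
    by simp
  show "((\<lambda>s. stokeslet a (X + (F s - F 0) + lz (p s \<bullet> p s) *\<^sub>R (p s + 1 *\<^sub>R n) - (X + (F s - F 0))) (Gz (p s \<bullet> p s) *\<^sub>R p' s)) has_integral
          (X + (F t - F 0) + lz (p t \<bullet> p t) *\<^sub>R (p t + 1 *\<^sub>R n) - (X + (F 0 - F 0) + lz (p 0 \<bullet> p 0) *\<^sub>R (p 0 + 1 *\<^sub>R n)))) {0..t}"
    by (rule ymotion[OF _ dp perp gd dF t]) auto
  show "((\<lambda>s. stokeslet a (X + (F s - F 0) + lz (p s \<bullet> p s) *\<^sub>R (p s + (-1) *\<^sub>R n) - (X + (F s - F 0))) (Gz (p s \<bullet> p s) *\<^sub>R p' s)) has_integral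
          (X + (F t - F 0) + lz (p t \<bullet> p t) *\<^sub>R (p t + (-1) *\<^sub>R n) - (X + (F 0 - F 0) + lz (p 0 \<bullet> p 0) *\<^sub>R (p 0 + (-1) *\<^sub>R n)))) {0..t}"
    by (rule ymotion[OF _ dp perp gd dF t]) auto
  have g: "good (p t \<bullet> p t)" using gd t by auto
  have np: "n \<bullet> p t = 0" using perp t by auto
  have n1: "norm (lz (p t \<bullet> p t) *\<^sub>R (p t + 1 *\<^sub>R n)) = rz (p t \<bullet> p t)" by (rule norm_d[OF g np]) simp
  have n2: "norm (lz (p t \<bullet> p t) *\<^sub>R (p t + (-1) *\<^sub>R n)) = rz (p t \<bullet> p t)" by (rule norm_d[OF g np]) simp
  have d12: "lz (p t \<bullet> p t) *\<^sub>R (p t + 1 *\<^sub>R n) - lz (p t \<bullet> p t) *\<^sub>R (p t + (-1) *\<^sub>R n) = (2 * lz (p t \<bullet> p t)) *\<^sub>R n"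
    by (rule d12_gen)
  have l0: "lz (p t \<bullet> p t) > 0" using good_facts[OF g] by simp
  show "sepR R (X + (F t - F 0)) (X + (F t - F 0) + lz (p t \<bullet> p t) *\<^sub>R (p t + 1 *\<^sub>R n))
     (X + (F t - F 0) + lz (p t \<bullet> p t) *\<^sub>R (p t + (-1) *\<^sub>R n))"
  proof -
    let ?x = "X + (F t - F 0)" and ?d1 = "lz (p t \<bullet> p t) *\<^sub>R (p t + 1 *\<^sub>R n)" and ?d2 = "lz (p t \<bullet> p t) *\<^sub>R (p t + (-1) *\<^sub>R n)"
    have "dist ?x (?x + ?d1) = norm ?d1" by (simp add: dist_norm)
    moreover have "dist ?x (?x + ?d2) = norm ?d2" by (simp add: dist_norm)
    moreover have "dist (?x + ?d1) (?x + ?d2) = norm ((2 * lz (p t \<bullet> p t)) *\<^sub>R n)"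
      by (simp only: dist_norm add_diff_cancel_left d12)
    moreover have "norm ((2 * lz (p t \<bullet> p t)) *\<^sub>R n) = 2 * lz (p t \<bullet> p t)" using l0 n by simp
    ultimately show ?thesis unfolding sepR_def using n1 n2 g by (simp add: good_def)
  qed
qed

end

lemma vdiff_gen: fixes e m :: "'a::real_vector"
  shows "(x *\<^sub>R e + y *\<^sub>R m) - ((- x) *\<^sub>R e + y *\<^sub>R m) = (2 * x) *\<^sub>R e"
proof -
  have "(x *\<^sub>R e + y *\<^sub>R m) - ((- x) *\<^sub>R e + y *\<^sub>R m) = x *\<^sub>R e + x *\<^sub>R e" by (simp add: algebra_simps)
  also have "\<dots> = (2 * x) *\<^sub>R e" by (simp add: scaleR_left_distrib[symmetric])
  finally show ?thesis .
qed

lemma sol_concat_ex: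
  assumes s1: "sol a R T1 u x y1 y2" and s2: "sol a R T2 u' x' y1' y2'"
    and j: "x' 0 = x T1" "y1' 0 = y1 T1" "y2' 0 = y2 T1"
  shows "\<exists>U X Y1 Y2. sol a R (T1 + T2) U X Y1 Y2 \<and> X 0 = x 0 \<and> Y1 0 = y1 0 \<and> Y2 0 = y2 0 \<and>
     X (T1 + T2) = x' T2 \<and> Y1 (T1 + T2) = y1' T2 \<and> Y2 (T1 + T2) = y2' T2"
proof -
  have T1: "T1 \<ge> 0" and T2: "T2 \<ge> 0" using s1 s2 by (auto simp: sol_def)
  show ?thesis
    apply (rule exI[of _ "glue T1 u u'"], rule exI[of _ "glue T1 x x'"], rule exI[of _ "glue T1 y1 y1'"], rule exI[of _ "glue T1 y2 y2'"])
    using sol_concat[OF s1 s2 j] T1 T2 j by (cases "T2 = 0") (auto simp: glue_def)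
qed

context cfg begin

definition "gg \<tau> = Gz (\<tau>^2)"
definition "Gam \<tau> = integral {0..\<tau>} gg"

lemma loop:
  fixes e m Xs :: vec3 and \<tau>1 \<theta> :: real
  assumes t1: "\<tau>1 > 0" and gd: "\<And>z. z \<in> {0..\<tau>1^2} \<Longrightarrow> good z"
    and e: "norm e = 1" and m: "norm m = 1" and ne: "n \<bullet> e = 0" and nm: "n \<bullet> m = 0" and em: "e \<bullet> m = 0"
  shows "\<exists>u x y1 y2. sol a R 3 u x y1 y2 \<and> x 0 = Xs \<and> y1 0 = Xs + lz 0 *\<^sub>R (0 + 1 *\<^sub>R n) \<and> y2 0 = Xs + lz 0 *\<^sub>R (0 + (-1) *\<^sub>R n)
     \<and> x 3 = Xs + (2 * sin \<theta> * (Gam \<tau>1 - \<tau>1 * gg \<tau>1)) *\<^sub>R e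
     \<and> y1 3 = Xs + (2 * sin \<theta> * (Gam \<tau>1 - \<tau>1 * gg \<tau>1)) *\<^sub>R e + lz 0 *\<^sub>R (0 + 1 *\<^sub>R n)
     \<and> y2 3 = Xs + (2 * sin \<theta> * (Gam \<tau>1 - \<tau>1 * gg \<tau>1)) *\<^sub>R e + lz 0 *\<^sub>R (0 + (-1) *\<^sub>R n)"
proof -
  define va where "va = sin \<theta> *\<^sub>R e + cos \<theta> *\<^sub>R m"
  define vb where "vb = (- sin \<theta>) *\<^sub>R e + cos \<theta> *\<^sub>R m"
  have ee: "e \<bullet> e = 1" using e by (simp add: norm_eq_1)
  have mm: "m \<bullet> m = 1" using m by (simp add: norm_eq_1)
  have me: "m \<bullet> e = 0" using em by (simp add: inner_commute)
  have unit: "(x *\<^sub>R e + y *\<^sub>R m) \<bullet> (x *\<^sub>R e + y *\<^sub>R m) = x^2 + y^2" for x y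
    using ee mm em me by (simp add: inner_add_left inner_add_right power2_eq_square)
  have perpv: "n \<bullet> (x *\<^sub>R e + y *\<^sub>R m) = 0" for x y using ne nm by (simp add: inner_add_right)
  have vaa: "va \<bullet> va = 1" unfolding va_def unit by simp
  have vbb: "vb \<bullet> vb = 1" unfolding vb_def unit by simp
  have cg: "continuous_on {0..\<tau>1} gg"
  proof -
    have "continuous_on {0..\<tau>1} (\<lambda>\<tau>. Gz (\<tau>^2))"
    proof (rule continuous_on_compose2[OF Gz_cont])
      show "continuous_on {0..\<tau>1} (\<lambda>\<tau>::real. \<tau>^2)" by (intro continuous_intros)
      show "(\<lambda>\<tau>::real. \<tau>^2) ` {0..\<tau>1} \<subseteq> {z. z \<ge> 0 \<and> A - Q * z > 0}"
      proof
        fix y assume "y \<in> (\<lambda>\<tau>::real. \<tau>^2) ` {0..\<tau>1}"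
        then obtain \<tau> where \<tau>: "\<tau> \<in> {0..\<tau>1}" "y = \<tau>^2" by blast
        then have "y \<in> {0..\<tau>1^2}" by (auto intro: power_mono)
        then show "y \<in> {z. z \<ge> 0 \<and> A - Q * z > 0}" using gd[of y] unfolding good_def by simp
      qed
    qed
    then show ?thesis unfolding gg_def .
  qed
  have dGam: "(Gam has_vector_derivative gg y) (at y within {0..\<tau>1})" if "y \<in> {0..\<tau>1}" for y
    unfolding Gam_def by (rule integral_has_vector_derivative[OF cg that])
  have gdt: "good ((t * \<tau>1)^2)" if "t \<in> {0..1}" for t
  proof -
    have "t * \<tau>1 \<le> \<tau>1" using that t1 by (simp add: mult_le_cancel_right1)
    then have "(t * \<tau>1)^2 \<le> \<tau>1^2" using that t1 by (intro power_mono) auto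
    then show ?thesis using gd that t1 by auto
  qed
  have gd1: "good (\<tau>1^2)" using gd by simp
  define p1 where "p1 t = (t * \<tau>1) *\<^sub>R va" for t
  define F1 where "F1 t = Gam (t * \<tau>1) *\<^sub>R va" for t
  have img1: "(\<lambda>t. t * \<tau>1) ` {0..1} = {0..\<tau>1}"
  proof
    show "(\<lambda>t. t * \<tau>1) ` {0..1} \<subseteq> {0..\<tau>1}" using t1 by (auto simp: mult_le_cancel_right1)
    show "{0..\<tau>1} \<subseteq> (\<lambda>t. t * \<tau>1) ` {0..1}"
    proof
      fix y assume "y \<in> {0..\<tau>1}"
      then have "y / \<tau>1 \<in> {0..1}" "y = (y / \<tau>1) * \<tau>1" using t1 by auto
      then show "y \<in> (\<lambda>t. t * \<tau>1) ` {0..1}" by blast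
    qed
  qed
  have P1: "sol a R 1 (\<lambda>t. Gz (p1 t \<bullet> p1 t) *\<^sub>R (\<tau>1 *\<^sub>R va)) (\<lambda>t. Xs + (F1 t - F1 0))
     (\<lambda>t. Xs + (F1 t - F1 0) + lz (p1 t \<bullet> p1 t) *\<^sub>R (p1 t + 1 *\<^sub>R n))
     (\<lambda>t. Xs + (F1 t - F1 0) + lz (p1 t \<bullet> p1 t) *\<^sub>R (p1 t + (-1) *\<^sub>R n))"
  proof (rule phase)
    fix t :: real assume t: "t \<in> {0..1}"
    have "((\<lambda>t. t * \<tau>1) has_vector_derivative \<tau>1) (at t within {0..1})"
      by (auto intro!: derivative_eq_intros)
    then show "(p1 has_vector_derivative \<tau>1 *\<^sub>R va) (at t within {0..1})"
      unfolding p1_def by (intro derivative_eq_intros) auto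
    show "n \<bullet> p1 t = 0 \<and> n \<bullet> (\<tau>1 *\<^sub>R va) = 0" unfolding p1_def va_def using ne nm by (simp add: inner_add_right inner_diff_right)
    show "good (p1 t \<bullet> p1 t)" using gdt[OF t] unfolding p1_def by (simp add: vaa power2_eq_square)
    have d: "((\<lambda>t. t * \<tau>1) has_vector_derivative \<tau>1) (at t within {0..1})"
      by (auto intro!: derivative_eq_intros)
    have dG: "(Gam has_vector_derivative gg (t * \<tau>1)) (at (t * \<tau>1) within (\<lambda>t. t * \<tau>1) ` {0..1})"
      unfolding img1 by (rule dGam) (use img1 t in blast)
    have "((Gam \<circ> (\<lambda>t. t * \<tau>1)) has_vector_derivative \<tau>1 *\<^sub>R gg (t * \<tau>1)) (at t within {0..1})"
      by (rule vector_diff_chain_within[OF d dG])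
    then have "((\<lambda>t. Gam (t * \<tau>1)) has_real_derivative \<tau>1 * gg (t * \<tau>1)) (at t within {0..1})"
      by (simp add: has_real_derivative_iff_has_vector_derivative o_def)
    from has_vector_derivative_scaleR[OF this has_vector_derivative_const[of va]]
    have "(F1 has_vector_derivative (\<tau>1 * gg (t * \<tau>1)) *\<^sub>R va) (at t within {0..1})"
      unfolding F1_def by simp
    moreover have eq: "Gz (p1 t \<bullet> p1 t) = gg (t * \<tau>1)"
      unfolding p1_def gg_def by (simp add: vaa power2_eq_square)
    ultimately show "(F1 has_vector_derivative Gz (p1 t \<bullet> p1 t) *\<^sub>R (\<tau>1 *\<^sub>R va)) (at t within {0..1})"
      by (simp add: mult.commute)
  qed (rule continuous_on_const)
  define X2 where "X2 = Xs + (F1 1 - F1 0)"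
  define w2 where "w2 t = sin (\<theta> * (1 - 2 * t)) *\<^sub>R e + cos (\<theta> * (1 - 2 * t)) *\<^sub>R m" for t
  define w2' where "w2' t = (cos (\<theta> * (1 - 2 * t)) * (- 2 * \<theta>)) *\<^sub>R e + (2 * \<theta> * sin (\<theta> * (1 - 2 * t))) *\<^sub>R m" for t
  define p2 where "p2 t = \<tau>1 *\<^sub>R w2 t" for t
  define F2 where "F2 t = gg \<tau>1 *\<^sub>R p2 t" for t
  have p2p2: "p2 t \<bullet> p2 t = \<tau>1^2" for t
  proof -
    have "w2 t \<bullet> w2 t = 1" unfolding w2_def unit by simp
    then show ?thesis unfolding p2_def by (simp add: power2_eq_square)
  qed
  have dw2: "(w2 has_vector_derivative w2' t) (at t within S)" for t S
  proof -
    have dth: "((\<lambda>t. \<theta> * (1 - 2 * t)) has_real_derivative (- 2 * \<theta>)) (at t within S)"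
      by (rule derivative_eq_intros refl | simp)+
    have d1: "((\<lambda>t. sin (\<theta> * (1 - 2 * t))) has_real_derivative (cos (\<theta> * (1 - 2 * t)) * (- 2 * \<theta>))) (at t within S)"
      and d2: "((\<lambda>t. cos (\<theta> * (1 - 2 * t))) has_real_derivative (- sin (\<theta> * (1 - 2 * t)) * (- 2 * \<theta>))) (at t within S)"
      by (rule DERIV_chain2[OF DERIV_sin dth], rule DERIV_chain2[OF DERIV_cos dth])
    have "(w2 has_vector_derivative (sin (\<theta> * (1 - 2 * t)) *\<^sub>R 0 + (cos (\<theta> * (1 - 2 * t)) * (- 2 * \<theta>)) *\<^sub>R e)
           + (cos (\<theta> * (1 - 2 * t)) *\<^sub>R 0 + (- sin (\<theta> * (1 - 2 * t)) * (- 2 * \<theta>)) *\<^sub>R m)) (at t within S)"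
      unfolding w2_def
      by (rule has_vector_derivative_add[OF has_vector_derivative_scaleR[OF d1 has_vector_derivative_const]
              has_vector_derivative_scaleR[OF d2 has_vector_derivative_const]])
    then show ?thesis unfolding w2'_def by (simp add: mult.commute)
  qed
  have P2: "sol a R 1 (\<lambda>t. Gz (p2 t \<bullet> p2 t) *\<^sub>R (\<tau>1 *\<^sub>R w2' t)) (\<lambda>t. X2 + (F2 t - F2 0))
     (\<lambda>t. X2 + (F2 t - F2 0) + lz (p2 t \<bullet> p2 t) *\<^sub>R (p2 t + 1 *\<^sub>R n))
     (\<lambda>t. X2 + (F2 t - F2 0) + lz (p2 t \<bullet> p2 t) *\<^sub>R (p2 t + (-1) *\<^sub>R n))"
  proof (rule phase)
    fix t :: real assume t: "t \<in> {0..1}"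
    show dp2: "(p2 has_vector_derivative \<tau>1 *\<^sub>R w2' t) (at t within {0..1})"
      unfolding p2_def using has_vector_derivative_scaleR[OF DERIV_const dw2] by simp
    show "n \<bullet> p2 t = 0 \<and> n \<bullet> (\<tau>1 *\<^sub>R w2' t) = 0" unfolding p2_def w2_def w2'_def using ne nm by (simp add: inner_add_right inner_diff_right)
    show "good (p2 t \<bullet> p2 t)" using gd1 by (simp add: p2p2)
    have "(F2 has_vector_derivative gg \<tau>1 *\<^sub>R (\<tau>1 *\<^sub>R w2' t)) (at t within {0..1})"
      unfolding F2_def using has_vector_derivative_scaleR[OF DERIV_const dp2] by simp
    then show "(F2 has_vector_derivative Gz (p2 t \<bullet> p2 t) *\<^sub>R (\<tau>1 *\<^sub>R w2' t)) (at t within {0..1})"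
      by (simp add: p2p2 gg_def)
  next
    show "continuous_on {0..1} (\<lambda>t. \<tau>1 *\<^sub>R w2' t)" unfolding w2'_def by (intro continuous_intros)
  qed
  define X3 where "X3 = X2 + (F2 1 - F2 0)"
  define p3 where "p3 t = ((1 - t) * \<tau>1) *\<^sub>R vb" for t
  define F3 where "F3 t = Gam ((1 - t) * \<tau>1) *\<^sub>R vb" for t
  have img3: "(\<lambda>t. (1 - t) * \<tau>1) ` {0..1} = {0..\<tau>1}"
  proof
    show "(\<lambda>t. (1 - t) * \<tau>1) ` {0..1} \<subseteq> {0..\<tau>1}" using t1 by (auto simp: mult_le_cancel_right1)
    show "{0..\<tau>1} \<subseteq> (\<lambda>t. (1 - t) * \<tau>1) ` {0..1}"
    proof
      fix y assume "y \<in> {0..\<tau>1}"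
      then have "1 - y / \<tau>1 \<in> {0..1}" "y = (1 - (1 - y / \<tau>1)) * \<tau>1" using t1 by auto
      then show "y \<in> (\<lambda>t. (1 - t) * \<tau>1) ` {0..1}" by blast
    qed
  qed
  have P3: "sol a R 1 (\<lambda>t. Gz (p3 t \<bullet> p3 t) *\<^sub>R ((- \<tau>1) *\<^sub>R vb)) (\<lambda>t. X3 + (F3 t - F3 0))
     (\<lambda>t. X3 + (F3 t - F3 0) + lz (p3 t \<bullet> p3 t) *\<^sub>R (p3 t + 1 *\<^sub>R n))
     (\<lambda>t. X3 + (F3 t - F3 0) + lz (p3 t \<bullet> p3 t) *\<^sub>R (p3 t + (-1) *\<^sub>R n))"
  proof (rule phase)
    fix t :: real assume t: "t \<in> {0..1}"
    have d: "((\<lambda>t. (1 - t) * \<tau>1) has_vector_derivative (- \<tau>1)) (at t within {0..1})"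
      by (auto intro!: derivative_eq_intros)
    then show "(p3 has_vector_derivative (- \<tau>1) *\<^sub>R vb) (at t within {0..1})"
      unfolding p3_def by (intro derivative_eq_intros) auto
    show "n \<bullet> p3 t = 0 \<and> n \<bullet> ((- \<tau>1) *\<^sub>R vb) = 0" unfolding p3_def vb_def using ne nm by (simp add: inner_add_right inner_diff_right)
    have "1 - t \<in> {0..1}" using t by auto
    from gdt[OF this] show "good (p3 t \<bullet> p3 t)" unfolding p3_def by (simp add: vbb power2_eq_square)
    have dG: "(Gam has_vector_derivative gg ((1 - t) * \<tau>1)) (at ((1 - t) * \<tau>1) within (\<lambda>t. (1 - t) * \<tau>1) ` {0..1})"
      unfolding img3 by (rule dGam) (use img3 t in blast)
    have "((Gam \<circ> (\<lambda>t. (1 - t) * \<tau>1)) has_vector_derivative (- \<tau>1) *\<^sub>R gg ((1 - t) * \<tau>1)) (at t within {0..1})"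
      by (rule vector_diff_chain_within[OF d dG])
    then have "((\<lambda>t. Gam ((1 - t) * \<tau>1)) has_real_derivative (- \<tau>1) * gg ((1 - t) * \<tau>1)) (at t within {0..1})"
      by (simp add: has_real_derivative_iff_has_vector_derivative o_def)
    from has_vector_derivative_scaleR[OF this has_vector_derivative_const[of vb]]
    have "(F3 has_vector_derivative ((- \<tau>1) * gg ((1 - t) * \<tau>1)) *\<^sub>R vb) (at t within {0..1})"
      unfolding F3_def by simp
    moreover have eq: "Gz (p3 t \<bullet> p3 t) = gg ((1 - t) * \<tau>1)"
      unfolding p3_def gg_def by (simp add: vbb power2_eq_square)
    ultimately show "(F3 has_vector_derivative Gz (p3 t \<bullet> p3 t) *\<^sub>R ((- \<tau>1) *\<^sub>R vb)) (at t within {0..1})"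
      by (simp add: mult.commute)
  qed (rule continuous_on_const)
  have j12: "p2 0 = p1 1" unfolding p2_def p1_def w2_def va_def by simp
  have j23: "p3 0 = p2 1" unfolding p3_def p2_def w2_def vb_def by simp
  have jx: "X2 + (F2 0 - F2 0) = Xs + (F1 1 - F1 0)" by (simp add: X2_def)
  obtain U12 X12 Y112 Y212 where S12: "sol a R (1 + 1) U12 X12 Y112 Y212"
    and S12v: "X12 0 = Xs + (F1 0 - F1 0)" "Y112 0 = Xs + (F1 0 - F1 0) + lz (p1 0 \<bullet> p1 0) *\<^sub>R (p1 0 + 1 *\<^sub>R n)"
      "Y212 0 = Xs + (F1 0 - F1 0) + lz (p1 0 \<bullet> p1 0) *\<^sub>R (p1 0 + (-1) *\<^sub>R n)"
      "X12 (1 + 1) = X2 + (F2 1 - F2 0)" "Y112 (1 + 1) = X2 + (F2 1 - F2 0) + lz (p2 1 \<bullet> p2 1) *\<^sub>R (p2 1 + 1 *\<^sub>R n)"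
      "Y212 (1 + 1) = X2 + (F2 1 - F2 0) + lz (p2 1 \<bullet> p2 1) *\<^sub>R (p2 1 + (-1) *\<^sub>R n)"
    using sol_concat_ex[OF P1 P2] jx j12 by auto
  have jx3: "X3 + (F3 0 - F3 0) = X2 + (F2 1 - F2 0)" by (simp add: X3_def)
  obtain U X Y1 Y2 where S: "sol a R (1 + 1 + 1) U X Y1 Y2"
    and Sv: "X 0 = X12 0" "Y1 0 = Y112 0" "Y2 0 = Y212 0"
      "X (1 + 1 + 1) = X3 + (F3 1 - F3 0)" "Y1 (1 + 1 + 1) = X3 + (F3 1 - F3 0) + lz (p3 1 \<bullet> p3 1) *\<^sub>R (p3 1 + 1 *\<^sub>R n)"
      "Y2 (1 + 1 + 1) = X3 + (F3 1 - F3 0) + lz (p3 1 \<bullet> p3 1) *\<^sub>R (p3 1 + (-1) *\<^sub>R n)"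
    using sol_concat_ex[OF S12 P3] jx3 j23 S12v by auto
  have three: "(1 + 1 + 1 :: real) = 3" by simp
  have G0: "Gam 0 = 0" by (simp add: Gam_def)
  have "X3 + (F3 1 - F3 0) = Xs + (Gam \<tau>1 *\<^sub>R va + (gg \<tau>1 * \<tau>1) *\<^sub>R (vb - va) - Gam \<tau>1 *\<^sub>R vb)"
    unfolding X3_def X2_def F1_def F2_def F3_def p2_def w2_def using G0
    by (simp add: va_def vb_def algebra_simps)
  also have "Gam \<tau>1 *\<^sub>R va + (gg \<tau>1 * \<tau>1) *\<^sub>R (vb - va) - Gam \<tau>1 *\<^sub>R vb = (Gam \<tau>1 - \<tau>1 * gg \<tau>1) *\<^sub>R (va - vb)"
    by (simp add: algebra_simps)
  also have "va - vb = (2 * sin \<theta>) *\<^sub>R e" unfolding va_def vb_def by (rule vdiff_gen)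
  finally have xe: "X3 + (F3 1 - F3 0) = Xs + (2 * sin \<theta> * (Gam \<tau>1 - \<tau>1 * gg \<tau>1)) *\<^sub>R e"
    by (simp add: mult.commute mult.left_commute scaleR_scaleR)
  have p30: "p3 1 = 0" "p1 0 = 0" by (simp_all add: p3_def p1_def)
  show ?thesis
    apply (rule exI[of _ U], rule exI[of _ X], rule exI[of _ Y1], rule exI[of _ Y2])
    using S Sv S12v xe p30 unfolding three by simp
qed

end

lemma alg2:
  fixes c r w z Q :: real
  assumes r: "r \<noteq> 0" and w: "w > 0" and ww: "1 + z = w * w" and Q: "Q = (c + r) * (c - r) / (w * w)"
  shows "((c * (c + r) / (2 * (1 + z) * w * (c - (c + r))) * (c + r) + (inverse r / 2 * - Q) * ((c + r) / w)) * (c - (c + r))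
      - ((c + r) / w * (c + r)) * (0 - (inverse r / 2 * - Q))) / ((c - (c + r)) * (c - (c + r)))
    = c * (c + r)^2 * (3 * c - 2 * (c + r)) / (2 * w^3 * (c - (c + r))^3)"
  unfolding ww Q using r w
  by (simp add: field_simps power2_eq_square power3_eq_cube)

context cfg begin

definition "Dz z = c * (rz z)^2 * (3 * c - 2 * rz z) / (2 * (sqrt (1 + z))^3 * (c - rz z)^3)"

lemma Gz_deriv:
  assumes z: "z \<ge> 0" and pos: "A - Q * z > 0"
  shows "(Gz has_real_derivative Dz z) (at z)"
proof -
  define r where "r = sd * sqrt (A - Q * z)"
  define w where "w = sqrt (1 + z)"
  have r0: "r \<noteq> 0" using sd pos by (auto simp: r_def)
  have w0: "w > 0" using z by (simp add: w_def)
  have ww: "1 + z = w * w" using z by (simp add: w_def)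
  have rr: "r * r = A - Q * z" using sd pos by (auto simp: r_def)
  have rho: "rz z = c + r" by (simp add: rhof_def r_def)
  have cr: "c - rz z \<noteq> 0" using r0 rho by simp
  have QQ: "Q = (c + r) * (c - r) / (w * w)"
  proof -
    have e1: "Q * (w * w) = Q + Q * z" by (simp add: ww[symmetric] algebra_simps)
    have e2: "(c + r) * (c - r) = c * c - r * r" by (simp add: algebra_simps)
    have "Q * (w * w) = (c + r) * (c - r)" unfolding e1 e2 rr using AQ by linarith
    then show ?thesis using w0 by (simp add: field_simps)
  qed
  have inv: "sd * (inverse (sqrt (A - Q * z)) / 2 * - Q) = inverse r / 2 * - Q"
    using sd by (auto simp: r_def)
  have dr: "(rz has_real_derivative (inverse r / 2 * - Q)) (at z)"
    using rho_deriv[OF pos, of c sd] unfolding inv .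
  have dl: "(lz has_real_derivative Lf c sd A Q z) (at z)" by (rule lam_deriv[OF sd AQ z pos])
  have dc: "((\<lambda>z. c - rz z) has_real_derivative (0 - (inverse r / 2 * - Q))) (at z)"
    by (rule DERIV_diff[OF DERIV_const dr])
  from DERIV_divide[OF DERIV_mult[OF dl dr] dc cr]
  have d: "(Gz has_real_derivative ((Lf c sd A Q z * rz z + (inverse r / 2 * - Q) * lz z) * (c - rz z)
      - (lz z * rz z) * (0 - (inverse r / 2 * - Q))) / ((c - rz z) * (c - rz z))) (at z)"
    unfolding Gf_def .
  have "lz z = (c + r) / w" by (simp add: lamf_def rho w_def)
  moreover have "Lf c sd A Q z = c * (c + r) / (2 * (1 + z) * w * (c - (c + r)))" by (simp add: Lf_def rho w_def)
  moreover have "Dz z = c * (c + r)^2 * (3 * c - 2 * (c + r)) / (2 * w^3 * (c - (c + r))^3)"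
    by (simp add: Dz_def rho w_def)
  ultimately have "((Lf c sd A Q z * rz z + (inverse r / 2 * - Q) * lz z) * (c - rz z)
      - (lz z * rz z) * (0 - (inverse r / 2 * - Q))) / ((c - rz z) * (c - rz z)) = Dz z"
    using alg2[OF r0 w0 ww QQ] unfolding rho by simp
  with d show ?thesis by simp
qed

end

lemma cont_gt:
  fixes f :: "real \<Rightarrow> real"
  assumes "isCont f 0" "f 0 > b"
  shows "\<exists>\<delta>>0. \<forall>z. \<bar>z\<bar> < \<delta> \<longrightarrow> f z > b"
proof -
  have "\<forall>e>0. \<exists>d>0. \<forall>y. dist y 0 < d \<longrightarrow> dist (f y) (f 0) < e"
    using assms(1) continuous_at_eps_delta by blast
  then obtain d where d: "d > 0" "\<forall>y. dist y 0 < d \<longrightarrow> dist (f y) (f 0) < f 0 - b"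
    using assms(2) by (meson diff_gt_0_iff_gt)
  show ?thesis
  proof (intro exI[of _ d] conjI allI impI)
    fix z :: real assume "\<bar>z\<bar> < d"
    then have "\<bar>f z - f 0\<bar> < f 0 - b" using d by (simp add: dist_real_def)
    then show "f z > b" by linarith
  qed (use d in simp)
qed

context cfg begin

lemma isCont_rz: "isCont rz z" unfolding rhof_def by (intro continuous_intros)
lemma isCont_lz0: "isCont lz 0" unfolding lamf_def rhof_def by (intro continuous_intros) auto

lemma rz0: assumes "sd * (rho0 - c) > 0" shows "rz 0 = rho0"
proof -
  have "sd * sqrt A = rho0 - c"
    using sd assms unfolding A_def by (auto simp: abs_if)
  then show ?thesis unfolding rhof_def by simp
qed

lemma exists_delta:
  assumes r0: "rho0 > R" and sdp: "sd * (rho0 - c) > 0"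
  shows "\<exists>\<delta>>0. \<forall>z. \<bar>z\<bar> < \<delta> \<longrightarrow> A - Q * z > 0 \<and> rz z > R \<and> 2 * lz z > R \<and> (rho0 \<noteq> 3 * c / 2 \<longrightarrow> 3 * c - 2 * rz z \<noteq> 0)"
proof -
  have rr: "rz 0 = rho0" by (rule rz0[OF sdp])
  have l0: "lz 0 = rho0" unfolding lamf_def rr by simp
  have A0: "A > 0" using sdp unfolding A_def by auto
  obtain d1 where d1: "d1 > 0" "\<forall>z. \<bar>z\<bar> < d1 \<longrightarrow> A - Q * z > 0"
    using cont_gt[of "\<lambda>z. A - Q * z" 0] A0 by (auto intro: continuous_intros)
  obtain d2 where d2: "d2 > 0" "\<forall>z. \<bar>z\<bar> < d2 \<longrightarrow> rz z > R"
    using cont_gt[of rz R] isCont_rz rr r0 by auto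
  obtain d3 where d3: "d3 > 0" "\<forall>z. \<bar>z\<bar> < d3 \<longrightarrow> 2 * lz z > R"
    using cont_gt[of "\<lambda>z. 2 * lz z" R] isCont_lz0 l0 r0 R by (auto intro: continuous_intros)
  obtain d4 where d4: "d4 > 0" "\<forall>z. \<bar>z\<bar> < d4 \<longrightarrow> (rho0 \<noteq> 3 * c / 2 \<longrightarrow> 3 * c - 2 * rz z \<noteq> 0)"
  proof (cases "rho0 = 3 * c / 2")
    case True then show ?thesis using that[of 1] by auto
  next
    case False
    have "isCont (\<lambda>z. \<bar>3 * c - 2 * rz z\<bar>) 0" using isCont_rz by (intro continuous_intros)
    moreover have "\<bar>3 * c - 2 * rz 0\<bar> > 0" using False rr by auto
    ultimately obtain d where "d > 0" "\<forall>z. \<bar>z\<bar> < d \<longrightarrow> \<bar>3 * c - 2 * rz z\<bar> > 0"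
      using cont_gt[of "\<lambda>z. \<bar>3 * c - 2 * rz z\<bar>" 0] by auto
    then show ?thesis using that[of d] by auto
  qed
  show ?thesis
    by (rule exI[of _ "min (min d1 d2) (min d3 d4)"]) (use d1 d2 d3 d4 in auto)
qed

lemma gg_cont:
  assumes "\<And>z. z \<in> {0..\<tau>1^2} \<Longrightarrow> good z"
  shows "continuous_on {0..\<tau>1} gg"
proof -
  have "continuous_on {0..\<tau>1} (\<lambda>\<tau>. Gz (\<tau>^2))"
  proof (rule continuous_on_compose2[OF Gz_cont])
    show "continuous_on {0..\<tau>1} (\<lambda>\<tau>::real. \<tau>^2)" by (intro continuous_intros)
    show "(\<lambda>\<tau>::real. \<tau>^2) ` {0..\<tau>1} \<subseteq> {z. z \<ge> 0 \<and> A - Q * z > 0}"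
    proof
      fix y assume "y \<in> (\<lambda>\<tau>::real. \<tau>^2) ` {0..\<tau>1}"
      then obtain \<tau> where \<tau>: "\<tau> \<in> {0..\<tau>1}" "y = \<tau>^2" by blast
      then have "y \<in> {0..\<tau>1^2}" by (auto intro: power_mono)
      then show "y \<in> {z. z \<ge> 0 \<and> A - Q * z > 0}" using assms[of y] unfolding good_def by simp
    qed
  qed
  then show ?thesis unfolding gg_def .
qed

lemma choose_tau:
  assumes r0: "rho0 > R" and sdp: "sd * (rho0 - c) > 0"
  shows "\<exists>\<tau>1>0. (\<forall>z\<in>{0..\<tau>1^2}. good z) \<and> Gam \<tau>1 - \<tau>1 * gg \<tau>1 \<noteq> 0"
proof -
  obtain \<delta> where \<delta>: "\<delta> > 0" and hd: "\<And>z. \<bar>z\<bar> < \<delta> \<Longrightarrow> A - Q * z > 0 \<and> rz z > R \<and> 2 * lz z > R \<and> (rho0 \<noteq> 3 * c / 2 \<longrightarrow> 3 * c - 2 * rz z \<noteq> 0)"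
    using exists_delta[OF r0 sdp] by blast
  define Z1 where "Z1 = \<delta> / 2"
  define \<tau>1 where "\<tau>1 = sqrt Z1"
  have Z1: "Z1 > 0" "Z1 < \<delta>" using \<delta> by (auto simp: Z1_def)
  have t1: "\<tau>1 > 0" "\<tau>1^2 = Z1" using Z1 by (auto simp: \<tau>1_def)
  have gd: "good z" if "z \<in> {0..Z1}" for z
    using hd[of z] that Z1 unfolding good_def by auto
  have c0: "c > 0" using a by (simp add: c_def)
  have nz: "3 * c - 2 * rz z \<noteq> 0" if z: "z \<in> {0<..Z1}" for z
  proof (cases "rho0 = 3 * c / 2")
    case False then show ?thesis using hd[of z] z Z1 by auto
  next
    case True
    have sd1: "sd = 1" using sdp True c0 sd by auto
    have Qp: "Q > 0" unfolding Q_def using True c0 by simp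
    have rc: "rho0 - c = c / 2" using True by simp
    have AA: "A = (c / 2)^2" unfolding A_def rc ..
    have "sqrt (A - Q * z) < sqrt A" using Qp z by (simp add: real_sqrt_less_iff)
    also have "sqrt A = c / 2" unfolding AA using c0 by simp
    finally have "rz z < c + c / 2" unfolding rhof_def sd1 by simp
    then show ?thesis by simp
  qed
  define P where "P z = (3 * c - 2 * rz z) * (c - rz z)" for z
  have cP: "continuous_on S P" for S unfolding P_def rhof_def by (intro continuous_intros)
  have Pnz: "P z \<noteq> 0" if "z \<in> {0<..Z1}" for z
  proof -
    have "A - Q * z > 0" using gd[of z] that by (auto simp: good_def)
    then have "c - rz z \<noteq> 0" using sd by (auto simp: rhof_def)
    then show ?thesis using nz[OF that] by (simp add: P_def)
  qed
  define \<sigma> where "\<sigma> = (if P Z1 > 0 then 1 else -1 :: real)"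
  have sP: "\<sigma> * P z > 0" if z: "z \<in> {0<..Z1}" for z
  proof (rule ccontr)
    assume neg: "\<not> \<sigma> * P z > 0"
    have PZ: "P Z1 \<noteq> 0" using Pnz Z1 by auto
    have Pz: "P z \<noteq> 0" using Pnz z by auto
    have zz: "z \<le> Z1" "0 < z" using z by auto
    show False
    proof (cases "P Z1 > 0")
      case True
      then have "P z < 0" using neg Pz by (auto simp: \<sigma>_def)
      then obtain x where "z \<le> x" "x \<le> Z1" "P x = 0" using IVT'[of P z 0 Z1] True zz cP by auto
      then show False using Pnz[of x] zz by auto
    next
      case False
      then have "P z > 0" "P Z1 < 0" using neg Pz PZ by (auto simp: \<sigma>_def)
      then obtain x where "z \<le> x" "x \<le> Z1" "P x = 0" using IVT2'[of P Z1 0 z] zz cP by auto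
      then show False using Pnz[of x] zz by auto
    qed
  qed
  have sig: "\<sigma> = 1 \<or> \<sigma> = -1" by (simp add: \<sigma>_def)
  have sD: "\<sigma> * Dz z > 0" if z: "z \<in> {0<..<Z1}" for z
  proof -
    have g: "good z" using gd z by auto
    have rpos: "rz z > 0" and cr: "c \<noteq> rz z" using good_facts[OF g] by auto
    have w: "sqrt (1 + z) > 0" using z by simp
    define K where "K = c * (rz z)^2 / (2 * (sqrt (1 + z))^3 * (c - rz z)^4)"
    have K: "K > 0" using c0 rpos w cr unfolding K_def by (simp add: zero_less_power_eq)
    have alg: "x * y / (2 * W^3 * d^3) = (x / (2 * W^3 * d^4)) * (y * d)" if "d \<noteq> 0" "W > 0" for x y W d :: real
      using that by (simp add: field_simps power3_eq_cube power4_eq_xxxx)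
    have "Dz z = K * P z"
      unfolding Dz_def K_def P_def using alg[of "c - rz z" "sqrt (1 + z)" "c * (rz z)^2" "3 * c - 2 * rz z"] w cr by simp
    then show ?thesis using sP[of z] z K by (simp add: mult.left_commute)
  qed
  have mono: "\<sigma> * Gz z1 < \<sigma> * Gz Z1" if z1: "z1 \<in> {0..<Z1}" for z1
  proof (rule DERIV_pos_imp_increasing_open[of z1 Z1 "\<lambda>z. \<sigma> * Gz z", simplified])
    show "z1 < Z1" using z1 by auto
    fix x assume x: "z1 < x" "x < Z1"
    have g: "good x" using gd x z1 by auto
    show "\<exists>y. ((\<lambda>z. \<sigma> * Gz z) has_real_derivative y) (at x) \<and> 0 < y"
      using DERIV_cmult[OF Gz_deriv, of x \<sigma>] g sD[of x] x z1 by (auto simp: good_def)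
  next
    have "continuous_on {z1..Z1} Gz"
      by (rule continuous_on_subset[OF Gz_cont]) (use gd z1 in \<open>auto simp: good_def\<close>)
    then show "continuous_on {z1..Z1} (\<lambda>z. \<sigma> * Gz z)" by (intro continuous_intros)
  qed
  have gdt: "\<And>z. z \<in> {0..\<tau>1^2} \<Longrightarrow> good z" using gd t1 by auto
  have cg: "continuous_on {0..\<tau>1} gg" by (rule gg_cont[OF gdt])
  define h where "h \<tau> = \<sigma> * (gg \<tau>1 - gg \<tau>)" for \<tau>
  have ch: "continuous_on {0..\<tau>1} h" unfolding h_def using cg by (intro continuous_intros)
  have hpos: "h \<tau> > 0" if "\<tau> \<in> {0..<\<tau>1}" for \<tau>
  proof -
    have "\<tau>^2 < \<tau>1^2" using that by (intro power_strict_mono) auto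
    then have "\<tau>^2 \<in> {0..<Z1}" using t1 by auto
    from mono[OF this] show ?thesis unfolding h_def gg_def t1(2) by (simp add: algebra_simps)
  qed
  have hnn: "h \<tau> \<ge> 0" if "\<tau> \<in> {0..\<tau>1}" for \<tau>
    using hpos[of \<tau>] that by (cases "\<tau> = \<tau>1") (auto simp: h_def)
  have ig: "gg integrable_on {0..\<tau>1}" by (rule integrable_continuous_real[OF cg])
  have hI: "(h has_integral (\<sigma> * (\<tau>1 * gg \<tau>1 - Gam \<tau>1))) {0..\<tau>1}"
  proof -
    have "((\<lambda>\<tau>. gg \<tau>1 - gg \<tau>) has_integral (\<tau>1 * gg \<tau>1 - Gam \<tau>1)) {0..\<tau>1}"
      using has_integral_diff[OF has_integral_const_real[of "gg \<tau>1" 0 \<tau>1] integrable_integral[OF ig]] t1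
      unfolding Gam_def by simp
    then show ?thesis unfolding h_def by (rule has_integral_mult_right)
  qed
  have "\<sigma> * (\<tau>1 * gg \<tau>1 - Gam \<tau>1) \<noteq> 0"
  proof
    assume "\<sigma> * (\<tau>1 * gg \<tau>1 - Gam \<tau>1) = 0"
    with hI have h0: "(h has_integral 0) (cbox 0 \<tau>1)" by simp
    have "h 0 = 0"
      by (rule has_integral_0_cbox_imp_0[OF _ _ h0]) (use ch hnn t1 in auto)
    moreover have "h 0 > 0" using hpos[of 0] t1 by auto
    ultimately show False by simp
  qed
  then have "Gam \<tau>1 - \<tau>1 * gg \<tau>1 \<noteq> 0" by auto
  then show ?thesis using t1 gdt by blast
qed

end

lemma final_of_sol:
  assumes s: "sol a R T u x y1 y2" and T: "T > 0" and st: "x 0 = x0" "y1 0 = y10" "y2 0 = y20"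
    and en: "x T = x0 + l *\<^sub>R e" "y1 T = y10 + l *\<^sub>R e" "y2 T = y20 + l *\<^sub>R e"
  shows "\<exists>T > 0. \<exists>u :: real \<Rightarrow> vec3. \<exists>x y1 y2 :: real \<Rightarrow> vec3.
           u \<in> borel_measurable (lebesgue_on {0..T}) \<and>
           (\<exists>B. \<forall>t\<in>{0..T}. norm (u t) \<le> B) \<and>
           (\<forall>t\<in>{0..T}.
              (u has_integral (x t - x0)) {0..t} \<and>
              ((\<lambda>s. stokeslet a (y1 s - x s) (u s)) has_integral (y1 t - y10)) {0..t} \<and>
              ((\<lambda>s. stokeslet a (y2 s - x s) (u s)) has_integral (y2 t - y20)) {0..t} \<and>
              sepR R (x t) (y1 t) (y2 t)) \<and>
           x T = x0 + l *\<^sub>R e \<and> y1 T = y10 + l *\<^sub>R e \<and> y2 T = y20 + l *\<^sub>R e"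
proof -
  have "(u has_integral (x T - x 0)) {0..T}" using s T by (auto simp: sol_def)
  then have "u \<in> borel_measurable (lebesgue_on {0..T})"
    by (intro integrable_imp_measurable) (auto simp: integrable_on_def)
  moreover have "\<exists>B. \<forall>t\<in>{0..T}. norm (u t) \<le> B" using s by (simp add: sol_def)
  moreover have "\<forall>t\<in>{0..T}.
              (u has_integral (x t - x0)) {0..t} \<and>
              ((\<lambda>s. stokeslet a (y1 s - x s) (u s)) has_integral (y1 t - y10)) {0..t} \<and>
              ((\<lambda>s. stokeslet a (y2 s - x s) (u s)) has_integral (y2 t - y20)) {0..t} \<and>
              sepR R (x t) (y1 t) (y2 t)"
    using s unfolding sol_def st by blast
  ultimately show ?thesis
    apply -
    apply (rule exI[of _ T], rule conjI[OF T], rule exI[of _ u], rule exI[of _ x], rule exI[of _ y1], rule exI[of _ y2])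
    using en by blast
qed

theorem proposition5:
  fixes a R l :: real and x0 y10 y20 e :: vec3
  assumes "a > 0" and "R > 0"
    and "sepR R x0 y10 y20"
    and "y10 - x0 = - (y20 - x0)"
    and "l > 0" and "norm e = 1" and "e \<bullet> (y10 - x0) = 0"
  shows "\<exists>T > 0. \<exists>u :: real \<Rightarrow> vec3. \<exists>x y1 y2 :: real \<Rightarrow> vec3.
           u \<in> borel_measurable (lebesgue_on {0..T}) \<and>
           (\<exists>B. \<forall>t\<in>{0..T}. norm (u t) \<le> B) \<and>
           (\<forall>t\<in>{0..T}.
              (u has_integral (x t - x0)) {0..t} \<and>
              ((\<lambda>s. stokeslet a (y1 s - x s) (u s)) has_integral (y1 t - y10)) {0..t} \<and>
              ((\<lambda>s. stokeslet a (y2 s - x s) (u s)) has_integral (y2 t - y20)) {0..t} \<and>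
              sepR R (x t) (y1 t) (y2 t)) \<and>
           x T = x0 + l *\<^sub>R e \<and> y1 T = y10 + l *\<^sub>R e \<and> y2 T = y20 + l *\<^sub>R e"
proof -
  note a = assms(1) and R = assms(2) and sep = assms(3) and sym = assms(4) and l = assms(5)
    and e = assms(6) and eperp = assms(7)
  define rho0 where "rho0 = norm (y10 - x0)"
  have r0: "rho0 > R" using sep unfolding sepR_def rho0_def by (simp add: dist_norm norm_minus_commute)
  have r0p: "rho0 > 0" using r0 R by simp
  define n where "n = (1 / rho0) *\<^sub>R (y10 - x0)"
  have n: "norm n = 1" using r0p by (simp add: n_def rho0_def)
  have y1n: "y10 = x0 + rho0 *\<^sub>R n" using r0p by (simp add: n_def)
  have y2n: "y20 = x0 - rho0 *\<^sub>R n"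
  proof -
    have "y20 - x0 = - (y10 - x0)" using sym by simp
    then show ?thesis using r0p by (simp add: n_def algebra_simps)
  qed
  have ne: "n \<bullet> e = 0" using eperp by (simp add: n_def inner_commute)
  define c0 where "c0 = 3 * a / 4"
  show ?thesis
  proof (cases "rho0 = c0")
    case True
    have st: "stokeslet a (y10 - x0) e = e" "stokeslet a (y20 - x0) e = e"
    proof -
      have q: "3 * a / (4 * rho0) = 1" using True r0p by (simp add: c0_def)
      have "n \<bullet> e = 0" by (rule ne)
      then show "stokeslet a (y10 - x0) e = e" "stokeslet a (y20 - x0) e = e"
        unfolding y1n y2n stokeslet_def using r0p n q by (simp_all add: inner_commute)
    qed
    have s: "sol a R l (\<lambda>t. e) (\<lambda>t. x0 + t *\<^sub>R e) (\<lambda>t. y10 + t *\<^sub>R e) (\<lambda>t. y20 + t *\<^sub>R e)"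
      unfolding sol_def
    proof (intro conjI ballI)
      show "0 \<le> l" using l by simp
      show "\<exists>B. \<forall>t\<in>{0..l}. norm e \<le> B" by blast
      fix t assume t: "t \<in> {0..l}"
      show "((\<lambda>t. e) has_integral (x0 + t *\<^sub>R e - (x0 + 0 *\<^sub>R e))) {0..t}"
        using has_integral_const_real[of e 0 t] t by simp
      show "((\<lambda>s. stokeslet a (y10 + s *\<^sub>R e - (x0 + s *\<^sub>R e)) e) has_integral (y10 + t *\<^sub>R e - (y10 + 0 *\<^sub>R e))) {0..t}"
        using has_integral_const_real[of e 0 t] st t by simp
      show "((\<lambda>s. stokeslet a (y20 + s *\<^sub>R e - (x0 + s *\<^sub>R e)) e) has_integral (y20 + t *\<^sub>R e - (y20 + 0 *\<^sub>R e))) {0..t}"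
        using has_integral_const_real[of e 0 t] st t by simp
      show "sepR R (x0 + t *\<^sub>R e) (y10 + t *\<^sub>R e) (y20 + t *\<^sub>R e)"
        using sep unfolding sepR_def by (simp add: dist_add_cancel2)
    qed
    show ?thesis by (rule final_of_sol[OF s l]) simp_all
  next
    case False
    define sd where "sd = (if rho0 > c0 then 1 else -1 :: real)"
    have sd: "sd = 1 \<or> sd = -1" by (simp add: sd_def)
    interpret cfg a R rho0 sd n using a R n sd by unfold_locales
    have cc: "cfg.c a = c0" by (simp add: c0_def cfg.c_def[OF cfg_axioms])
    have sdp: "sd * (rho0 - cfg.c a) > 0" using False unfolding cc sd_def by auto
    obtain \<tau>1 where t1: "\<tau>1 > 0" and gd: "\<forall>z\<in>{0..\<tau>1^2}. good z" and kap: "Gam \<tau>1 - \<tau>1 * gg \<tau>1 \<noteq> 0"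
      using choose_tau[OF r0 sdp] by blast
    define \<kappa> where "\<kappa> = Gam \<tau>1 - \<tau>1 * gg \<tau>1"
    have kap: "\<kappa> \<noteq> 0" using kap by (simp add: \<kappa>_def)
    define m where "m = cross3 n e"
    have nm: "n \<bullet> m = 0" and em: "e \<bullet> m = 0" unfolding m_def by (simp_all add: dot_cross_self inner_commute)
    have "(norm m)^2 = 1" using norm_cross_dot[of n e] n e ne unfolding m_def by simp
    then have "norm m = 1 \<or> norm m = -1" by (simp add: power2_eq_1_iff)
    then have m: "norm m = 1" using norm_ge_zero[of m] by linarith
    define N where "N = nat \<lceil>l / (2 * \<bar>\<kappa>\<bar>)\<rceil>"
    define M where "M = real (Suc N)"
    have M: "M > 0" "M \<ge> l / (2 * \<bar>\<kappa>\<bar>)" unfolding M_def N_def by (auto simp: of_nat_Suc) (linarith)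
    define s\<theta> where "s\<theta> = l / (2 * M * \<kappa>)"
    have "\<bar>s\<theta>\<bar> \<le> 1"
    proof -
      have "l \<le> 2 * M * \<bar>\<kappa>\<bar>" using M kap by (simp add: field_simps)
      then show ?thesis using kap M l unfolding s\<theta>_def by (simp add: abs_mult field_simps)
    qed
    then have "-1 \<le> s\<theta>" "s\<theta> \<le> 1" by auto
    define \<theta> where "\<theta> = arcsin s\<theta>"
    have sth: "sin \<theta> = s\<theta>" unfolding \<theta>_def using \<open>-1 \<le> s\<theta>\<close> \<open>s\<theta> \<le> 1\<close> by (rule sin_arcsin)
    have lz0: "lz 0 = rho0" using rz0[OF sdp] by (simp add: lamf_def)
    obtain u x y1 y2 where L: "sol a R 3 u x y1 y2" "x 0 = x0" "y1 0 = x0 + lz 0 *\<^sub>R (0 + 1 *\<^sub>R n)"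
      "y2 0 = x0 + lz 0 *\<^sub>R (0 + (-1) *\<^sub>R n)"
      "x 3 = x0 + (2 * sin \<theta> * \<kappa>) *\<^sub>R e"
      "y1 3 = x0 + (2 * sin \<theta> * \<kappa>) *\<^sub>R e + lz 0 *\<^sub>R (0 + 1 *\<^sub>R n)"
      "y2 3 = x0 + (2 * sin \<theta> * \<kappa>) *\<^sub>R e + lz 0 *\<^sub>R (0 + (-1) *\<^sub>R n)"
      using loop[OF t1 _ e m ne nm em, where Xs=x0 and \<theta>=\<theta>] gd unfolding \<kappa>_def by blast
    define v where "v = (2 * sin \<theta> * \<kappa>) *\<^sub>R e"
    have L0: "y1 0 = y10" "y2 0 = y20"
    proof -
      show "y1 0 = y10" using L(3) lz0 y1n by simp
      have "y2 0 = x0 + (- rho0) *\<^sub>R n" using L(4) lz0 by simp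
      then show "y2 0 = y20" using y2n by simp
    qed
    have Le: "x 3 = x 0 + v" "y1 3 = y1 0 + v" "y2 3 = y2 0 + v"
    proof -
      show "x 3 = x 0 + v" using L(2,5) by (simp add: v_def)
      have a1: "y1 0 = x0 + rho0 *\<^sub>R n" using L(3) lz0 by simp
      have b1: "y1 3 = x0 + v + rho0 *\<^sub>R n" using L(6) lz0 by (simp add: v_def)
      show "y1 3 = y1 0 + v" unfolding a1 b1 by (simp add: algebra_simps)
      have a2: "y2 0 = x0 + (- rho0) *\<^sub>R n" using L(4) lz0 by simp
      have b2: "y2 3 = x0 + v + (- rho0) *\<^sub>R n" using L(7) lz0 by (simp add: v_def)
      show "y2 3 = y2 0 + v" unfolding a2 b2 by (simp add: algebra_simps)
    qed
    obtain U X Y1 Y2 where RR: "sol a R (real (Suc N) * 3) U X Y1 Y2" "X 0 = x 0" "Y1 0 = y1 0" "Y2 0 = y2 0"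
      "X (real (Suc N) * 3) = x 0 + real (Suc N) *\<^sub>R v" "Y1 (real (Suc N) * 3) = y1 0 + real (Suc N) *\<^sub>R v"
      "Y2 (real (Suc N) * 3) = y2 0 + real (Suc N) *\<^sub>R v"
      using sol_repeat[OF L(1) _ Le, of N] by auto
    have Mv: "real (Suc N) *\<^sub>R v = l *\<^sub>R e"
    proof -
      have "real (Suc N) * (2 * sin \<theta> * \<kappa>) = l"
        unfolding sth s\<theta>_def M_def[symmetric] using M kap by (simp add: field_simps)
      then show ?thesis unfolding v_def by simp
    qed
    show ?thesis
      by (rule final_of_sol[OF RR(1)]) (use RR L L0 Mv in auto)
  qed
qed

end
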